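(* Let $\lambda\ge1$, let $x^*$ be an optimal solution to $(P_\lambda)$ (assumed feasible), let $y^*$ be an optimal solution to $\max_{y\in\mathbb{R}^{\mathcal{S}}_{\ge0}}g_\lambda(y)$, and let $\mathcal{L}$ be a laminar decomposition of $x^*$. Then for every $L\in\mathcal{L}$, all edges of $\mathrm{supp}(x^* )\cap E^{\mathcal{L}}_L$ have the same $c^{y^*}$-cost.
   Context: Setting: $G=(V,E)$ undirected connected graph, costs $c_e\ge0$, a chain $\mathcal{S}$ of node sets $S_1\subsetneq\dots\subsetneq S_\ell\subsetneq V$, integers $b_S$. $E(S)$ = edges with both ends in $S$, $\delta(S)$ = edges with exactly one end in $S$, $z(F)=\sum_{e\in F}z_e$, $\mathrm{supp}(z)=\{e:z_e>0\}$. $P_{ST}(G)=\{x\in\mathbb{R}^E_{\ge0}: x(E(S))\le|S|-1\ \forall\emptyset\ne S\subsetneq V,\ x(E)=|V|-1\}$. $(P_\lambda)$: minimize $\sum_ec_ex_e$ over $x\in P_{ST}(G)$ with $x(\delta(S))\le\lambda b_S$ for all $S\in\mathcal{S}$. For $y\in\mathbb{R}^{\mathcal{S}}$, $c^y_e=c_e+\sum_{S\in\mathcal{S}:e\in\delta(S)}y_S$ and $g_\lambda(y)=\min_{x\in P_{ST}(G)}\big(\sum_ec^y_ex_e-\lambda\sum_{S}b_Sy_S\big)$. A laminar decomposition of $x\in P_{ST}(G)$ is an inclusion-wise maximal laminar family of nonempty sets $A\subseteq V$ with $x(E(A))=|A|-1$. For $L\in\mathcal{L}$, $E^{\mathcal{L}}_L$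 is the edge set of the graph obtained from $(L,E(L))$ by contracting the maximal members of $\mathcal{L}$ strictly contained in $L$ (i.e., edges of $E(L)$ not contained in any such member). *)

theory Defs
  imports Complex_Main
begin

definition graph :: "'a set \<Rightarrow> 'a set set \<Rightarrow> bool" where
  "graph V E \<longleftrightarrow> finite V \<and> (\<forall>e\<in>E. e \<subseteq> V \<and> card e = 2)"

definition connected_graph :: "'a set \<Rightarrow> 'a set set \<Rightarrow> bool" where
  "connected_graph V E \<longleftrightarrow> graph V E \<and> V \<noteq> {} \<and>
     (\<forall>u\<in>V. \<forall>v\<in>V. (u, v) \<in> {(a, b). {a, b} \<in> E}\<^sup>*)"

definition inside :: "'a set set \<Rightarrow> 'a set \<Rightarrow> 'a set set" where
  "inside E S = {e \<in> E. e \<subseteq> S}"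

definition cut :: "'a set set \<Rightarrow> 'a set \<Rightarrow> 'a set set" where
  "cut E S = {e \<in> E. card (e \<inter> S) = 1}"

definition P_ST :: "'a set \<Rightarrow> 'a set set \<Rightarrow> ('a set \<Rightarrow> real) set" where
  "P_ST V E = {x. (\<forall>e\<in>E. x e \<ge> 0)
      \<and> (\<forall>S. S \<noteq> {} \<and> S \<subset> V \<longrightarrow> sum x (inside E S) \<le> real (card S) - 1)
      \<and> sum x E = real (card V) - 1}"

definition chain_family :: "'a set \<Rightarrow> 'a set set \<Rightarrow> bool" where
  "chain_family V \<S> \<longleftrightarrow> (\<forall>S\<in>\<S>. S \<subset> V) \<and> (\<forall>S\<in>\<S>. \<forall>T\<in>\<S>. S \<subseteq> T \<or> T \<subseteq> S)"

definition cost :: "'a set set \<Rightarrow> ('a set \<Rightarrow> real) \<Rightarrow> ('a set \<Rightarrow> real) \<Rightarrow> real" where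
  "cost E c x = (\<Sum>e\<in>E. c e * x e)"

definition feasible_P :: "'a set \<Rightarrow> 'a set set \<Rightarrow> 'a set set \<Rightarrow> ('a set \<Rightarrow> int) \<Rightarrow> real
    \<Rightarrow> ('a set \<Rightarrow> real) \<Rightarrow> bool" where
  "feasible_P V E \<S> b lam x \<longleftrightarrow> x \<in> P_ST V E \<and>
     (\<forall>S\<in>\<S>. sum x (cut E S) \<le> lam * real_of_int (b S))"

definition optimal_P :: "'a set \<Rightarrow> 'a set set \<Rightarrow> ('a set \<Rightarrow> real) \<Rightarrow> 'a set set
    \<Rightarrow> ('a set \<Rightarrow> int) \<Rightarrow> real \<Rightarrow> ('a set \<Rightarrow> real) \<Rightarrow> bool" where
  "optimal_P V E c \<S> b lam x \<longleftrightarrow> feasible_P V E \<S> b lam x \<and>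
     (\<forall>x'. feasible_P V E \<S> b lam x' \<longrightarrow> cost E c x \<le> cost E c x')"

definition cy :: "'a set set \<Rightarrow> 'a set set \<Rightarrow> ('a set \<Rightarrow> real) \<Rightarrow> ('a set \<Rightarrow> real)
    \<Rightarrow> 'a set \<Rightarrow> real" where
  "cy E \<S> c y e = c e + (\<Sum>S\<in>{S\<in>\<S>. e \<in> cut E S}. y S)"

text \<open>Lagrangian dual function g_lambda (the minimum over the polytope, written as an infimum).\<close>
definition g_lam :: "'a set \<Rightarrow> 'a set set \<Rightarrow> ('a set \<Rightarrow> real) \<Rightarrow> 'a set set
    \<Rightarrow> ('a set \<Rightarrow> int) \<Rightarrow> real \<Rightarrow> ('a set \<Rightarrow> real) \<Rightarrow> real" where
  "g_lam V E c \<S> b lam y =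
     (INF x\<in>P_ST V E. cost E (cy E \<S> c y) x - lam * (\<Sum>S\<in>\<S>. real_of_int (b S) * y S))"

definition dual_optimal :: "'a set \<Rightarrow> 'a set set \<Rightarrow> ('a set \<Rightarrow> real) \<Rightarrow> 'a set set
    \<Rightarrow> ('a set \<Rightarrow> int) \<Rightarrow> real \<Rightarrow> ('a set \<Rightarrow> real) \<Rightarrow> bool" where
  "dual_optimal V E c \<S> b lam y \<longleftrightarrow> (\<forall>S\<in>\<S>. y S \<ge> 0) \<and>
     (\<forall>y'. (\<forall>S\<in>\<S>. y' S \<ge> 0) \<longrightarrow> g_lam V E c \<S> b lam y' \<le> g_lam V E c \<S> b lam y)"

definition laminar :: "'a set set \<Rightarrow> bool" where
  "laminar \<L> \<longleftrightarrow> (\<forall>A\<in>\<L>. \<forall>B\<in>\<L>. A \<subseteq> B \<or> B \<subseteq> A \<or> A \<inter> B = {})"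

definition tight_laminar :: "'a set \<Rightarrow> 'a set set \<Rightarrow> ('a set \<Rightarrow> real) \<Rightarrow> 'a set set \<Rightarrow> bool" where
  "tight_laminar V E x \<L> \<longleftrightarrow> laminar \<L> \<and>
     (\<forall>A\<in>\<L>. A \<noteq> {} \<and> A \<subseteq> V \<and> sum x (inside E A) = real (card A) - 1)"

definition laminar_decomposition :: "'a set \<Rightarrow> 'a set set \<Rightarrow> ('a set \<Rightarrow> real) \<Rightarrow> 'a set set \<Rightarrow> bool" where
  "laminar_decomposition V E x \<L> \<longleftrightarrow> tight_laminar V E x \<L> \<and>
     (\<forall>\<L>'. tight_laminar V E x \<L>' \<and> \<L> \<subseteq> \<L>' \<longrightarrow> \<L>' = \<L>)"

text \<open>E^L_L: edges of E(L) not contained in any maximal member of the family strictly inside L.\<close>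
definition maximal_children :: "'a set set \<Rightarrow> 'a set \<Rightarrow> 'a set set" where
  "maximal_children \<L> L = {M\<in>\<L>. M \<subset> L \<and> \<not> (\<exists>M'\<in>\<L>. M \<subset> M' \<and> M' \<subset> L)}"

definition contracted_edges :: "'a set set \<Rightarrow> 'a set set \<Rightarrow> 'a set \<Rightarrow> 'a set set" where
  "contracted_edges E \<L> L = {e\<in>inside E L. \<forall>M\<in>maximal_children \<L> L. \<not> e \<subseteq> M}"

end

theory Submission
  imports Defs
begin


definition dot :: "'e set \<Rightarrow> ('e \<Rightarrow> real) \<Rightarrow> ('e \<Rightarrow> real) \<Rightarrow> real" where
  "dot E a z = (\<Sum>e\<in>E. a e * z e)"

lemma dot_lin_right: "dot E a (\<lambda>e. p e - k * q e) = dot E a p - k * dot E a q"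
  unfolding dot_def by (simp add: algebra_simps sum_subtractf sum_distrib_left)

lemma dot_lin_left: "dot E (\<lambda>e. a e - k * q e) z = dot E a z - k * dot E q z"
  unfolding dot_def by (simp add: algebra_simps sum_subtractf sum_distrib_left)

lemma dot_add_right: "dot E a (\<lambda>e. p e + k * q e) = dot E a p + k * dot E a q"
  unfolding dot_def by (simp add: algebra_simps sum.distrib sum_distrib_left)

lemma dot_sum_left: "dot E (\<lambda>e. \<Sum>j\<in>J. u j * a j e) z = (\<Sum>j\<in>J. u j * dot E (a j) z)"
  unfolding dot_def by (simp add: sum_distrib_left sum_distrib_right sum.swap[of _ E] mult.assoc)

lemma farkas:
  assumes "finite E" "finite J"
  shows "(\<exists>u. (\<forall>j\<in>J. u j \<ge> 0) \<and> (\<forall>e\<in>E. c e = (\<Sum>j\<in>J. u j * a j e)))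
       \<or> (\<exists>z. (\<forall>j\<in>J. dot E (a j) z \<le> 0) \<and> dot E c z > 0)"
  using assms(2)
proof (induction J arbitrary: c a rule: finite_induct)
  case empty
  show ?case
  proof (cases "\<forall>e\<in>E. c e = 0")
    case True then show ?thesis by simp
  next
    case False
    then obtain e0 where e0: "e0 \<in> E" "c e0 \<noteq> 0" by blast
    have "dot E c c = (\<Sum>e\<in>E. c e * c e)" by (simp add: dot_def)
    also have "\<dots> \<ge> c e0 * c e0"
      using member_le_sum[of e0 E "\<lambda>e. c e * c e"] e0 assms(1) by simp
    finally have "dot E c c > 0" using e0 by (smt (verit) not_real_square_gt_zero)
    then show ?thesis by auto
  qed
next
  case (insert j0 J)
  from insert.IH[of c a] show ?case
  proof
    assume "\<exists>u. (\<forall>j\<in>J. u j \<ge> 0) \<and> (\<forall>e\<in>E. c e = (\<Sum>j\<in>J. u j * a j e))"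
    then obtain u where u: "\<forall>j\<in>J. u j \<ge> 0" "\<forall>e\<in>E. c e = (\<Sum>j\<in>J. u j * a j e)" by blast
    let ?u = "u(j0 := 0)"
    have "\<forall>j\<in>insert j0 J. ?u j \<ge> 0" using u by auto
    moreover have "\<forall>e\<in>E. c e = (\<Sum>j\<in>insert j0 J. ?u j * a j e)"
    proof
      fix e assume "e \<in> E"
      have "(\<Sum>j\<in>insert j0 J. ?u j * a j e) = (\<Sum>j\<in>J. ?u j * a j e)"
        using insert.hyps by simp
      also have "\<dots> = (\<Sum>j\<in>J. u j * a j e)"
        using insert.hyps by (intro sum.cong) auto
      finally show "c e = (\<Sum>j\<in>insert j0 J. ?u j * a j e)" using u \<open>e\<in>E\<close> by simp
    qed
    ultimately show ?thesis by blast
  next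
    assume "\<exists>z. (\<forall>j\<in>J. dot E (a j) z \<le> 0) \<and> dot E c z > 0"
    then obtain z where z: "\<forall>j\<in>J. dot E (a j) z \<le> 0" "dot E c z > 0" by blast
    show ?thesis
    proof (cases "dot E (a j0) z \<le> 0")
      case True then show ?thesis using z by auto
    next
      case False
      define \<alpha> where "\<alpha> = dot E (a j0) z"
      have \<alpha>: "\<alpha> > 0" using False \<alpha>_def by simp
      define a' where "a' = (\<lambda>j e. a j e - (dot E (a j) z / \<alpha>) * a j0 e)"
      define c' where "c' = (\<lambda>e. c e - (dot E c z / \<alpha>) * a j0 e)"
      from insert.IH[of c' a'] show ?thesis
      proof
        assume "\<exists>u. (\<forall>j\<in>J. u j \<ge> 0) \<and> (\<forall>e\<in>E. c' e = (\<Sum>j\<in>J. u j * a' j e))"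
        then obtain u where u: "\<forall>j\<in>J. u j \<ge> 0" "\<forall>e\<in>E. c' e = (\<Sum>j\<in>J. u j * a' j e)" by blast
        define k where "k = dot E c z / \<alpha> - (\<Sum>j\<in>J. u j * dot E (a j) z) / \<alpha>"
        have "(\<Sum>j\<in>J. u j * dot E (a j) z) \<le> 0"
          using u(1) z(1) by (intro sum_nonpos) (simp add: mult_nonneg_nonpos)
        hence k0: "k \<ge> 0" using \<alpha> z(2) unfolding k_def by (simp add: divide_simps)
        let ?u = "u(j0 := k)"
        have "\<forall>j\<in>insert j0 J. ?u j \<ge> 0" using u k0 by auto
        moreover have "\<forall>e\<in>E. c e = (\<Sum>j\<in>insert j0 J. ?u j * a j e)"
        proof
          fix e assume "e \<in> E"
          have s: "(\<Sum>j\<in>J. ?u j * a j e) = (\<Sum>j\<in>J. u j * a j e)"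
            using insert.hyps by (intro sum.cong) auto
          have "c' e = (\<Sum>j\<in>J. u j * a' j e)" using u \<open>e\<in>E\<close> by simp
          also have "\<dots> = (\<Sum>j\<in>J. u j * a j e) - (\<Sum>j\<in>J. u j * dot E (a j) z) / \<alpha> * a j0 e"
            unfolding a'_def by (simp add: algebra_simps sum_subtractf sum_distrib_right sum_distrib_left sum_divide_distrib)
          finally have "c e = (\<Sum>j\<in>J. u j * a j e) + k * a j0 e"
            unfolding c'_def k_def by (simp add: algebra_simps)
          then show "c e = (\<Sum>j\<in>insert j0 J. ?u j * a j e)"
            using insert.hyps s by simp
        qed
        ultimately show ?thesis by blast
      next
        assume "\<exists>z'. (\<forall>j\<in>J. dot E (a' j) z' \<le> 0) \<and> dot E c' z' > 0"
        then obtain z' where z': "\<forall>j\<in>J. dot E (a' j) z' \<le> 0" "dot E c' z' > 0" by blast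
        define w where "w = (\<lambda>e. z' e - (dot E (a j0) z' / \<alpha>) * z e)"
        have gen: "dot E q w = dot E (\<lambda>e. q e - (dot E q z / \<alpha>) * a j0 e) z'" for q
          unfolding w_def dot_lin_right dot_lin_left
          by (simp add: dot_def algebra_simps sum_distrib_left)
        have "\<forall>j\<in>insert j0 J. dot E (a j) w \<le> 0"
        proof
          fix j assume "j \<in> insert j0 J"
          then show "dot E (a j) w \<le> 0"
          proof
            assume "j = j0"
            have "dot E (a j0) w = dot E (a j0) z' - (dot E (a j0) z' / \<alpha>) * \<alpha>"
              unfolding w_def dot_lin_right \<alpha>_def by simp
            then show ?thesis using \<alpha> \<open>j = j0\<close> by simp
          next
            assume "j \<in> J"
            then show ?thesis using z'(1) gen[of "a j"] unfolding a'_def by simp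
          qed
        qed
        moreover have "dot E c w > 0" using z'(2) gen[of c] unfolding c'_def by simp
        ultimately show ?thesis by blast
      qed
    qed
  qed
qed

lemma small_eps:
  assumes "finite J" "\<forall>j\<in>J. s j > (0::real)"
  shows "\<exists>\<epsilon>>0. \<forall>j\<in>J. \<epsilon> * t j \<le> s j"
  using assms
proof (induction J rule: finite_induct)
  case empty then show ?case by (auto intro: exI[of _ 1])
next
  case (insert j0 J)
  then obtain \<epsilon> where \<epsilon>: "\<epsilon> > 0" "\<forall>j\<in>J. \<epsilon> * t j \<le> s j" by auto
  define \<delta> where "\<delta> = min \<epsilon> (s j0 / (\<bar>t j0\<bar> + 1))"
  have s0: "s j0 > 0" using insert by auto
  have d0: "\<delta> > 0" using \<epsilon> s0 unfolding \<delta>_def by (simp add: add_pos_nonneg)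
  have "\<forall>j\<in>insert j0 J. \<delta> * t j \<le> s j"
  proof
    fix j assume j: "j \<in> insert j0 J"
    show "\<delta> * t j \<le> s j"
    proof (cases "j = j0")
      case True
      have "\<delta> * t j0 \<le> \<delta> * (\<bar>t j0\<bar> + 1)" using d0 by (intro mult_left_mono) auto
      also have "\<dots> \<le> (s j0 / (\<bar>t j0\<bar> + 1)) * (\<bar>t j0\<bar> + 1)"
        by (intro mult_right_mono) (auto simp: \<delta>_def)
      also have "\<dots> = s j0" by (simp add: add_pos_nonneg)
      finally show ?thesis using True by simp
    next
      case False
      hence "j \<in> J" using j by simp
      hence "s j > 0" "\<epsilon> * t j \<le> s j" using insert \<epsilon> by auto
      show ?thesis
      proof (cases "t j \<ge> 0")
        case True
        have "\<delta> * t j \<le> \<epsilon> * t j" using True by (intro mult_right_mono) (auto simp: \<delta>_def)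
        then show ?thesis using \<open>\<epsilon> * t j \<le> s j\<close> by simp
      next
        case False
        have "\<delta> * t j \<le> 0" using False d0 by (simp add: mult_nonneg_nonpos)
        then show ?thesis using \<open>s j > 0\<close> by simp
      qed
    qed
  qed
  then show ?case using d0 by blast
qed


definition avec :: "'a set set \<Rightarrow> nat \<times> 'a set \<Rightarrow> 'a set \<Rightarrow> real" where
  "avec E j e = (if fst j = 0 then (if e = snd j then -1 else 0)
     else if fst j = 1 then (if e \<subseteq> snd j then 1 else 0)
     else if fst j = 2 then 1 else if fst j = 3 then -1
     else (if e \<in> cut E (snd j) then 1 else 0))"

definition beta :: "'a set \<Rightarrow> real \<Rightarrow> ('a set \<Rightarrow> int) \<Rightarrow> nat \<times> 'a set \<Rightarrow> real" where
  "beta V lam b j = (if fst j = 0 then 0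
     else if fst j = 1 then real (card (snd j)) - 1
     else if fst j = 2 then real (card V) - 1
     else if fst j = 3 then - (real (card V) - 1)
     else lam * real_of_int (b (snd j)))"

definition JP :: "'a set \<Rightarrow> 'a set set \<Rightarrow> (nat \<times> 'a set) set" where
  "JP V E = (\<lambda>g. (0::nat, g)) ` E \<union> (\<lambda>S. (1, S)) ` {S. S \<noteq> {} \<and> S \<subset> V} \<union> {(2, {}), (3, {})}"

definition JD :: "'a set set \<Rightarrow> (nat \<times> 'a set) set" where
  "JD \<S> = (\<lambda>S. (4::nat, S)) ` \<S>"

lemma dot_a0: "finite E \<Longrightarrow> g \<in> E \<Longrightarrow> dot E (avec E (0, g)) x = - x g"
  unfolding dot_def avec_def
  by (simp add: if_distrib[where f="\<lambda>v. v * _"] sum.delta cong: if_cong)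

lemma dot_a1: "finite E \<Longrightarrow> dot E (avec E (1, S)) x = sum x (inside E S)"
  unfolding dot_def avec_def inside_def
  by (simp add: if_distrib[where f="\<lambda>v. v * _"] sum.inter_filter[symmetric] cong: if_cong)

lemma dot_a1': "finite E \<Longrightarrow> dot E (avec E (Suc 0, S)) x = sum x (inside E S)"
  using dot_a1[of E S x] by simp

lemma dot_a2: "dot E (avec E (2, S)) x = sum x E"
  unfolding dot_def avec_def by simp

lemma dot_a3: "dot E (avec E (3, S)) x = - sum x E"
  unfolding dot_def avec_def by (simp add: sum_negf)

lemma dot_a4: "finite E \<Longrightarrow> dot E (avec E (4, S)) x = sum x (cut E S)"
  unfolding dot_def avec_def cut_def
  by (simp add: if_distrib[where f="\<lambda>v. v * _"] sum.inter_filter[symmetric] cong: if_cong)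

lemma finite_JP: "finite V \<Longrightarrow> finite E \<Longrightarrow> finite (JP V E)"
proof -
  assume "finite V" "finite E"
  have "{S. S \<noteq> {} \<and> S \<subset> V} \<subseteq> Pow V" by auto
  hence "finite {S. S \<noteq> {} \<and> S \<subset> V}" using \<open>finite V\<close> by (meson finite_Pow_iff finite_subset)
  thus ?thesis unfolding JP_def using \<open>finite E\<close> by simp
qed

lemma P_ST_iff:
  assumes "finite E" "\<forall>e\<in>E. e \<subseteq> V"
  shows "x \<in> P_ST V E \<longleftrightarrow> (\<forall>j\<in>JP V E. dot E (avec E j) x \<le> beta V lam b j)"
proof
  assume x: "x \<in> P_ST V E"
  have A: "\<forall>g\<in>E. dot E (avec E (0, g)) x \<le> beta V lam b (0, g)"
    using x assms(1) unfolding P_ST_def by (simp add: dot_a0 beta_def)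
  have B: "\<forall>S\<in>{S. S \<noteq> {} \<and> S \<subset> V}. dot E (avec E (1, S)) x \<le> beta V lam b (1, S)"
    using x assms(1) unfolding P_ST_def by (simp add: dot_a1 dot_a1' beta_def)
  have C: "dot E (avec E (2, {})) x \<le> beta V lam b (2, {})" "dot E (avec E (3, {})) x \<le> beta V lam b (3, {})"
    using x unfolding P_ST_def by (simp_all add: dot_a2 dot_a3 beta_def)
  show "\<forall>j\<in>JP V E. dot E (avec E j) x \<le> beta V lam b j"
    unfolding JP_def using A B C by blast
next
  assume h: "\<forall>j\<in>JP V E. dot E (avec E j) x \<le> beta V lam b j"
  have "\<forall>e\<in>E. x e \<ge> 0"
  proof
    fix e assume "e \<in> E"
    hence "(0, e) \<in> JP V E" unfolding JP_def by auto
    hence "dot E (avec E (0, e)) x \<le> beta V lam b (0, e)" using h by blast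
    thus "x e \<ge> 0" using \<open>e\<in>E\<close> assms(1) by (simp add: dot_a0 beta_def)
  qed
  moreover have "\<forall>S. S \<noteq> {} \<and> S \<subset> V \<longrightarrow> sum x (inside E S) \<le> real (card S) - 1"
  proof (intro allI impI)
    fix S assume "S \<noteq> {} \<and> S \<subset> V"
    hence "(1, S) \<in> JP V E" unfolding JP_def by auto
    hence "dot E (avec E (1, S)) x \<le> beta V lam b (1, S)" using h by blast
    thus "sum x (inside E S) \<le> real (card S) - 1" using assms(1) by (simp add: dot_a1 dot_a1' beta_def)
  qed
  moreover have "(2, {}) \<in> JP V E" "(3, {}) \<in> JP V E" unfolding JP_def by auto
  hence "dot E (avec E (2, {})) x \<le> beta V lam b (2, {})" "dot E (avec E (3, {})) x \<le> beta V lam b (3, {})"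
    using h by blast+
  hence "sum x E = real (card V) - 1" by (simp add: dot_a2 dot_a3 beta_def)
  ultimately show "x \<in> P_ST V E" unfolding P_ST_def by blast
qed

lemma feasible_iff:
  assumes "finite E" "\<forall>e\<in>E. e \<subseteq> V"
  shows "feasible_P V E \<S> b lam x \<longleftrightarrow> (\<forall>j\<in>JP V E \<union> JD \<S>. dot E (avec E j) x \<le> beta V lam b j)"
proof -
  have "(\<forall>j\<in>JD \<S>. dot E (avec E j) x \<le> beta V lam b j) \<longleftrightarrow>
        (\<forall>S\<in>\<S>. sum x (cut E S) \<le> lam * real_of_int (b S))"
    using assms(1) by (simp add: JD_def dot_a4 beta_def)
  thus ?thesis unfolding feasible_P_def P_ST_iff[OF assms, of x lam b] by blast
qed

lemma cost_dot: "cost E c x = dot E c x"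
  unfolding cost_def dot_def by simp

lemma cost_cy:
  assumes "finite E" "finite \<S>"
  shows "cost E (cy E \<S> c y) x = cost E c x + (\<Sum>S\<in>\<S>. y S * sum x (cut E S))"
proof -
  have pw: "cy E \<S> c y e * x e = c e * x e + (\<Sum>S\<in>\<S>. (if e \<in> cut E S then y S * x e else 0))" for e
  proof -
    have "(\<Sum>S\<in>\<S>. (if e \<in> cut E S then y S * x e else 0)) = (\<Sum>S\<in>{S \<in> \<S>. e \<in> cut E S}. y S * x e)"
      using assms(2) by (simp add: sum.inter_filter)
    also have "\<dots> = x e * sum y {S \<in> \<S>. e \<in> cut E S}"
      by (simp add: sum_distrib_left mult.commute)
    finally show ?thesis unfolding cy_def by (simp add: algebra_simps)
  qed
  have "cost E (cy E \<S> c y) x = cost E c x + (\<Sum>e\<in>E. \<Sum>S\<in>\<S>. (if e \<in> cut E S then y S * x e else 0))"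
    unfolding cost_def pw by (rule sum.distrib)
  also have "(\<Sum>e\<in>E. \<Sum>S\<in>\<S>. (if e \<in> cut E S then y S * x e else 0))
      = (\<Sum>S\<in>\<S>. \<Sum>e\<in>E. (if e \<in> cut E S then y S * x e else 0))"
    by (rule sum.swap)
  also have "\<dots> = (\<Sum>S\<in>\<S>. y S * sum x (cut E S))"
  proof (rule sum.cong[OF refl])
    fix S
    have "cut E S \<subseteq> E" unfolding cut_def by auto
    have "(\<Sum>e\<in>E. (if e \<in> cut E S then y S * x e else 0)) = (\<Sum>e\<in>cut E S. y S * x e)"
      using assms(1) \<open>cut E S \<subseteq> E\<close> by (simp add: sum.If_cases Int_absorb1)
    thus "(\<Sum>e\<in>E. (if e \<in> cut E S then y S * x e else 0)) = y S * sum x (cut E S)"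
      by (simp add: sum_distrib_left)
  qed
  finally show ?thesis .
qed


lemma lagrange_exists:
  assumes fV: "finite V" and fE: "finite E" and EV: "\<forall>e\<in>E. e \<subseteq> V" and fS: "finite \<S>"
    and opt: "optimal_P V E c \<S> b lam xs"
  shows "\<exists>y. (\<forall>S\<in>\<S>. y S \<ge> 0) \<and> (\<forall>x\<in>P_ST V E.
           cost E (cy E \<S> c y) x - lam * (\<Sum>S\<in>\<S>. real_of_int (b S) * y S) \<ge> cost E c xs)"
proof -
  define J where "J = JP V E \<union> JD \<S>"
  have fJ: "finite J" unfolding J_def JD_def using finite_JP[OF fV fE] fS by simp
  define J0 where "J0 = {j\<in>J. dot E (avec E j) xs = beta V lam b j}"
  have fJ0: "finite J0" using fJ unfolding J0_def by simp
  have feas: "\<forall>j\<in>J. dot E (avec E j) xs \<le> beta V lam b j"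
    using opt feasible_iff[OF fE EV] unfolding optimal_P_def J_def by blast
  have claim: "dot E (\<lambda>e. - c e) z \<le> 0" if hz: "\<forall>j\<in>J0. dot E (avec E j) z \<le> 0" for z
  proof -
    define J1 where "J1 = J - J0"
    have "finite J1" using fJ unfolding J1_def by simp
    moreover have "\<forall>j\<in>J1. beta V lam b j - dot E (avec E j) xs > 0"
      using feas unfolding J1_def J0_def by force
    ultimately obtain \<epsilon> where \<epsilon>: "\<epsilon> > 0"
      "\<forall>j\<in>J1. \<epsilon> * dot E (avec E j) z \<le> beta V lam b j - dot E (avec E j) xs"
      using small_eps[of J1 "\<lambda>j. beta V lam b j - dot E (avec E j) xs" "\<lambda>j. dot E (avec E j) z"]
      by blast
    define x' where "x' = (\<lambda>e. xs e + \<epsilon> * z e)"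
    have "\<forall>j\<in>J. dot E (avec E j) x' \<le> beta V lam b j"
    proof
      fix j assume "j \<in> J"
      have d: "dot E (avec E j) x' = dot E (avec E j) xs + \<epsilon> * dot E (avec E j) z"
        unfolding x'_def dot_add_right ..
      show "dot E (avec E j) x' \<le> beta V lam b j"
      proof (cases "j \<in> J0")
        case True
        hence "\<epsilon> * dot E (avec E j) z \<le> 0" using hz \<epsilon>(1) by (simp add: mult_nonneg_nonpos)
        moreover have "dot E (avec E j) xs \<le> beta V lam b j" using feas \<open>j\<in>J\<close> by blast
        ultimately show ?thesis using d by linarith
      next
        case False
        hence "j \<in> J1" using \<open>j\<in>J\<close> unfolding J1_def by simp
        hence "\<epsilon> * dot E (avec E j) z \<le> beta V lam b j - dot E (avec E j) xs" using \<epsilon>(2) by blast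
        thus ?thesis using d by linarith
      qed
    qed
    hence "feasible_P V E \<S> b lam x'" using feasible_iff[OF fE EV] unfolding J_def by blast
    hence "cost E c xs \<le> cost E c x'" using opt unfolding optimal_P_def by blast
    also have "cost E c x' = cost E c xs + \<epsilon> * dot E c z"
      unfolding cost_dot x'_def dot_add_right ..
    finally have "dot E c z \<ge> 0" using \<epsilon>(1) by (simp add: zero_le_mult_iff)
    moreover have "dot E (\<lambda>e. - c e) z = - dot E c z" unfolding dot_def by (simp add: sum_negf)
    ultimately show ?thesis by simp
  qed
  from farkas[OF fE fJ0, of "\<lambda>e. - c e" "avec E"] claim
  obtain u where u: "\<forall>j\<in>J0. u j \<ge> 0" "\<forall>e\<in>E. - c e = (\<Sum>j\<in>J0. u j * avec E j e)"
    by force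
  define y where "y = (\<lambda>S. if (4::nat, S) \<in> J0 then u (4, S) else 0)"
  define D0 where "D0 = J0 \<inter> JD \<S>"
  define P0 where "P0 = J0 - JD \<S>"
  have J0split: "J0 = P0 \<union> D0" "P0 \<inter> D0 = {}" unfolding P0_def D0_def by auto
  have fP0: "finite P0" "finite D0" using fJ0 unfolding P0_def D0_def by auto
  have P0JP: "P0 \<subseteq> JP V E" unfolding P0_def J0_def J_def by auto
  have reindex: "(\<Sum>S\<in>\<S>. y S * h S) = (\<Sum>j\<in>D0. u j * h (snd j))" for h :: "'a set \<Rightarrow> real"
  proof -
    have "(\<Sum>S\<in>\<S>. y S * h S) = (\<Sum>S\<in>\<S>. if (4::nat, S) \<in> J0 then u (4, S) * h S else 0)"
      unfolding y_def by (intro sum.cong) auto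
    also have "\<dots> = (\<Sum>S\<in>{S\<in>\<S>. (4::nat, S) \<in> J0}. u (4, S) * h S)"
      using fS by (simp add: sum.inter_filter)
    also have "\<dots> = (\<Sum>j\<in>Pair 4 ` {S\<in>\<S>. (4::nat, S) \<in> J0}. u j * h (snd j))"
      by (subst sum.reindex) (auto simp: inj_on_def)
    also have "Pair 4 ` {S\<in>\<S>. (4::nat, S) \<in> J0} = D0"
      unfolding D0_def JD_def by auto
    finally show ?thesis .
  qed
  have y0: "\<forall>S\<in>\<S>. y S \<ge> 0" using u(1) unfolding y_def by auto
  have cdot: "dot E c x = - (\<Sum>j\<in>J0. u j * dot E (avec E j) x)" for x
  proof -
    have "dot E c x = dot E (\<lambda>e. - (\<Sum>j\<in>J0. u j * avec E j e)) x"
      unfolding dot_def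
    proof (intro sum.cong refl)
      fix e assume "e \<in> E"
      hence "- c e = (\<Sum>j\<in>J0. u j * avec E j e)" using u(2) by blast
      thus "c e * x e = - (\<Sum>j\<in>J0. u j * avec E j e) * x e" by (metis minus_minus)
    qed
    also have "\<dots> = - dot E (\<lambda>e. (\<Sum>j\<in>J0. u j * avec E j e)) x"
      unfolding dot_def by (simp add: sum_negf)
    finally show ?thesis unfolding dot_sum_left .
  qed
  have D0beta: "beta V lam b j = lam * real_of_int (b (snd j))" if "j \<in> D0" for j
    using that unfolding D0_def JD_def beta_def by auto
  have D0dot: "dot E (avec E j) x = sum x (cut E (snd j))" if "j \<in> D0" for j x
    using that dot_a4[OF fE] unfolding D0_def JD_def by auto
  have "\<forall>x\<in>P_ST V E. cost E (cy E \<S> c y) x - lam * (\<Sum>S\<in>\<S>. real_of_int (b S) * y S) \<ge> cost E c xs"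
  proof
    fix x assume x: "x \<in> P_ST V E"
    have xP: "\<forall>j\<in>JP V E. dot E (avec E j) x \<le> beta V lam b j"
      using x P_ST_iff[OF fE EV] by blast
    have "cost E (cy E \<S> c y) x - lam * (\<Sum>S\<in>\<S>. real_of_int (b S) * y S)
        = dot E c x + (\<Sum>S\<in>\<S>. y S * sum x (cut E S)) - (\<Sum>S\<in>\<S>. y S * (lam * real_of_int (b S)))"
      unfolding cost_cy[OF fE fS] unfolding cost_dot by (simp add: sum_distrib_left algebra_simps)
    also have "\<dots> = dot E c x + (\<Sum>j\<in>D0. u j * dot E (avec E j) x) - (\<Sum>j\<in>D0. u j * beta V lam b j)"
      unfolding reindex using D0beta D0dot by (simp cong: sum.cong)
    also have "\<dots> = - (\<Sum>j\<in>P0. u j * dot E (avec E j) x) - (\<Sum>j\<in>D0. u j * beta V lam b j)"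
      unfolding cdot J0split(1) sum.union_disjoint[OF fP0 J0split(2)] by simp
    also have "\<dots> \<ge> - (\<Sum>j\<in>P0. u j * beta V lam b j) - (\<Sum>j\<in>D0. u j * beta V lam b j)"
    proof -
      have "(\<Sum>j\<in>P0. u j * dot E (avec E j) x) \<le> (\<Sum>j\<in>P0. u j * beta V lam b j)"
      proof (rule sum_mono)
        fix j assume "j \<in> P0"
        hence "u j \<ge> 0" "dot E (avec E j) x \<le> beta V lam b j"
          using u(1) xP P0JP J0split by auto
        thus "u j * dot E (avec E j) x \<le> u j * beta V lam b j" by (rule mult_left_mono[rotated])
      qed
      thus ?thesis by simp
    qed
    also have "- (\<Sum>j\<in>P0. u j * beta V lam b j) - (\<Sum>j\<in>D0. u j * beta V lam b j)
        = - (\<Sum>j\<in>J0. u j * beta V lam b j)"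
      unfolding J0split(1) sum.union_disjoint[OF fP0 J0split(2)] by simp
    also have "\<dots> = - (\<Sum>j\<in>J0. u j * dot E (avec E j) xs)"
      unfolding J0_def by simp
    also have "\<dots> = cost E c xs" unfolding cost_dot cdot ..
    finally show "cost E (cy E \<S> c y) x - lam * (\<Sum>S\<in>\<S>. real_of_int (b S) * y S) \<ge> cost E c xs" .
  qed
  thus ?thesis using y0 by blast
qed


lemma inside_le:
  assumes EV: "\<forall>e\<in>E. e \<subseteq> V" and xP: "x \<in> P_ST V E" and A: "A \<noteq> {}" "A \<subseteq> V"
  shows "sum x (inside E A) \<le> real (card A) - 1"
proof (cases "A = V")
  case True
  have "inside E V = E" unfolding inside_def using EV by auto
  thus ?thesis using xP True unfolding P_ST_def by simp
next
  case False
  thus ?thesis using xP A unfolding P_ST_def by auto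
qed

lemma inside_Int: "inside E A \<inter> inside E B = inside E (A \<inter> B)"
  unfolding inside_def by auto

lemma supermod:
  fixes x :: "'a set \<Rightarrow> real"
  assumes fE: "finite E" and x0: "\<forall>e\<in>E. x e \<ge> 0"
  shows "sum x (inside E A) + sum x (inside E B) \<le> sum x (inside E (A \<union> B)) + sum x (inside E (A \<inter> B))"
proof -
  have f: "finite (inside E A)" "finite (inside E B)" using fE unfolding inside_def by auto
  have "sum x (inside E A) + sum x (inside E B) = sum x (inside E A \<union> inside E B) + sum x (inside E (A \<inter> B))"
    using sum.union_inter[OF f, of x] unfolding inside_Int by simp
  also have "sum x (inside E A \<union> inside E B) \<le> sum x (inside E (A \<union> B))"
  proof (rule sum_mono2)
    show "finite (inside E (A \<union> B))" using fE unfolding inside_def by simp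
    show "inside E A \<union> inside E B \<subseteq> inside E (A \<union> B)" unfolding inside_def by auto
    show "\<And>b. b \<in> inside E (A \<union> B) - (inside E A \<union> inside E B) \<Longrightarrow> 0 \<le> x b"
      using x0 unfolding inside_def by auto
  qed
  finally show ?thesis by simp
qed

lemma tight_uncross:
  assumes fV: "finite V" and fE: "finite E" and EV: "\<forall>e\<in>E. e \<subseteq> V" and xP: "x \<in> P_ST V E"
    and A: "A \<subseteq> V" "sum x (inside E A) \<ge> real (card A) - 1"
    and B: "B \<subseteq> V" "sum x (inside E B) \<ge> real (card B) - 1"
    and AB: "A \<inter> B \<noteq> {}"
  shows "sum x (inside E (A \<inter> B)) \<ge> real (card (A \<inter> B)) - 1"
    and "sum x (inside E (A \<union> B)) \<ge> real (card (A \<union> B)) - 1"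
proof -
  have x0: "\<forall>e\<in>E. x e \<ge> 0" using xP unfolding P_ST_def by simp
  have fin: "finite A" "finite B" using A(1) B(1) fV finite_subset by auto
  have c: "real (card A) + real (card B) = real (card (A \<union> B)) + real (card (A \<inter> B))"
    using card_Un_Int[OF fin] by (metis of_nat_add)
  have u: "sum x (inside E (A \<union> B)) \<le> real (card (A \<union> B)) - 1"
    using inside_le[OF EV xP, of "A \<union> B"] AB A(1) B(1) by auto
  have i: "sum x (inside E (A \<inter> B)) \<le> real (card (A \<inter> B)) - 1"
    using inside_le[OF EV xP, of "A \<inter> B"] AB A(1) B(1) by auto
  have s: "sum x (inside E A) + sum x (inside E B) \<le> sum x (inside E (A \<union> B)) + sum x (inside E (A \<inter> B))"
    by (rule supermod[OF fE x0])
  show "sum x (inside E (A \<inter> B)) \<ge> real (card (A \<inter> B)) - 1" using A B c u s by linarith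
  show "sum x (inside E (A \<union> B)) \<ge> real (card (A \<union> B)) - 1" using A B c i s by linarith
qed


locale ctx =
  fixes V :: "'a set" and E :: "'a set set" and x :: "'a set \<Rightarrow> real" and \<L> :: "'a set set" and L :: "'a set"
  assumes fV: "finite V" and EV: "\<forall>e\<in>E. e \<subseteq> V \<and> card e = 2"
    and xP: "x \<in> P_ST V E" and LD: "laminar_decomposition V E x \<L>" and Lin: "L \<in> \<L>"

context ctx
begin

lemma fE: "finite E"
proof -
  have "E \<subseteq> Pow V" using EV by auto
  thus ?thesis using fV by (meson finite_Pow_iff finite_subset)
qed

lemma EV': "\<forall>e\<in>E. e \<subseteq> V" using EV by blast

lemma edge_ne: "g \<in> E \<Longrightarrow> g \<noteq> {}" using EV by fastforce

lemma x0: "\<forall>e\<in>E. x e \<ge> 0" using xP unfolding P_ST_def by simp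

lemma TL: "tight_laminar V E x \<L>" using LD unfolding laminar_decomposition_def by blast

lemma lam: "laminar \<L>" using TL unfolding tight_laminar_def by blast

lemma Lmem: "A \<in> \<L> \<Longrightarrow> A \<noteq> {} \<and> A \<subseteq> V \<and> sum x (inside E A) = real (card A) - 1"
  using TL unfolding tight_laminar_def by blast

lemma fL: "finite \<L>"
proof -
  have "\<L> \<subseteq> Pow V" using Lmem by auto
  thus ?thesis using fV by (meson finite_Pow_iff finite_subset)
qed

lemma lamD: "A \<in> \<L> \<Longrightarrow> B \<in> \<L> \<Longrightarrow> A \<subseteq> B \<or> B \<subseteq> A \<or> A \<inter> B = {}"
  using lam unfolding laminar_def by blast

abbreviation "C \<equiv> maximal_children \<L> L"
abbreviation "CE \<equiv> contracted_edges E \<L> L"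

lemma C_sub: "M \<in> C \<Longrightarrow> M \<in> \<L> \<and> M \<subset> L"
  unfolding maximal_children_def by blast

lemma fC: "finite C"
  using fL unfolding maximal_children_def by simp

lemma C_disj: "M1 \<in> C \<Longrightarrow> M2 \<in> C \<Longrightarrow> M1 \<noteq> M2 \<Longrightarrow> M1 \<inter> M2 = {}"
proof -
  assume m: "M1 \<in> C" "M2 \<in> C" "M1 \<noteq> M2"
  have "M1 \<subseteq> M2 \<or> M2 \<subseteq> M1 \<or> M1 \<inter> M2 = {}" using lamD C_sub m by blast
  moreover have "\<not> M1 \<subset> M2" using m unfolding maximal_children_def by blast
  moreover have "\<not> M2 \<subset> M1" using m unfolding maximal_children_def by blast
  ultimately show ?thesis using m(3) by blast
qed

end


context ctx begin

lemma exists_child: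
  assumes A: "A \<in> \<L>" "A \<subset> L"
  shows "\<exists>M\<in>C. A \<subseteq> M"
proof -
  define X where "X = {M\<in>\<L>. A \<subseteq> M \<and> M \<subset> L}"
  have "finite X" using fL unfolding X_def by simp
  moreover have "A \<in> X" using A unfolding X_def by blast
  ultimately obtain M where M: "M \<in> X" "\<forall>N\<in>X. M \<subseteq> N \<longrightarrow> M = N"
    using finite_has_maximal2[of X A] by blast
  have "M \<in> C" unfolding maximal_children_def
  proof (intro CollectI conjI)
    show "M \<in> \<L>" "M \<subset> L" using M(1) unfolding X_def by auto
    show "\<not> (\<exists>M'\<in>\<L>. M \<subset> M' \<and> M' \<subset> L)"
    proof
      assume "\<exists>M'\<in>\<L>. M \<subset> M' \<and> M' \<subset> L"
      then obtain M' where "M' \<in> \<L>" "M \<subset> M'" "M' \<subset> L" by blast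
      moreover hence "M' \<in> X" using M(1) unfolding X_def by auto
      ultimately show False using M(2) by blast
    qed
  qed
  thus ?thesis using M(1) unfolding X_def by blast
qed

end

context ctx begin

lemma decomp:
  assumes "A \<subseteq> L"
  shows "sum x (inside E A) = (\<Sum>M\<in>C. sum x (inside E (A \<inter> M))) + sum x (CE \<inter> inside E A)"
proof -
  have eq: "inside E A = (\<Union>M\<in>C. inside E (A \<inter> M)) \<union> (CE \<inter> inside E A)"
  proof
    show "inside E A \<subseteq> (\<Union>M\<in>C. inside E (A \<inter> M)) \<union> (CE \<inter> inside E A)"
    proof
      fix g assume g: "g \<in> inside E A"
      show "g \<in> (\<Union>M\<in>C. inside E (A \<inter> M)) \<union> (CE \<inter> inside E A)"
      proof (cases "\<exists>M\<in>C. g \<subseteq> M")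
        case True
        then obtain M where "M \<in> C" "g \<subseteq> M" by blast
        thus ?thesis using g unfolding inside_def by blast
      next
        case False
        have "g \<in> inside E L" using g assms unfolding inside_def by auto
        hence "g \<in> CE" using False unfolding contracted_edges_def by auto
        thus ?thesis using g by blast
      qed
    qed
    show "(\<Union>M\<in>C. inside E (A \<inter> M)) \<union> (CE \<inter> inside E A) \<subseteq> inside E A"
      unfolding inside_def by auto
  qed
  have fin: "\<forall>M\<in>C. finite (inside E (A \<inter> M))" using fE unfolding inside_def by simp
  have disj: "\<forall>M1\<in>C. \<forall>M2\<in>C. M1 \<noteq> M2 \<longrightarrow> inside E (A \<inter> M1) \<inter> inside E (A \<inter> M2) = {}"
  proof (intro ballI impI)
    fix M1 M2 assume "M1 \<in> C" "M2 \<in> C" "M1 \<noteq> M2"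
    hence d: "M1 \<inter> M2 = {}" using C_disj by blast
    show "inside E (A \<inter> M1) \<inter> inside E (A \<inter> M2) = {}"
    proof (rule ccontr)
      assume "inside E (A \<inter> M1) \<inter> inside E (A \<inter> M2) \<noteq> {}"
      then obtain g where "g \<in> E" "g \<subseteq> M1" "g \<subseteq> M2" unfolding inside_def by blast
      thus False using d edge_ne by blast
    qed
  qed
  have disj2: "(\<Union>M\<in>C. inside E (A \<inter> M)) \<inter> (CE \<inter> inside E A) = {}"
  proof (rule ccontr)
    assume "(\<Union>M\<in>C. inside E (A \<inter> M)) \<inter> (CE \<inter> inside E A) \<noteq> {}"
    then obtain g M where "M \<in> C" "g \<in> inside E (A \<inter> M)" "g \<in> CE" by blast
    thus False unfolding contracted_edges_def inside_def by blast
  qed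
  have fin2: "finite (\<Union>M\<in>C. inside E (A \<inter> M))" "finite (CE \<inter> inside E A)"
    using fE fC unfolding inside_def by auto
  have "sum x (inside E A) = sum x (\<Union>M\<in>C. inside E (A \<inter> M)) + sum x (CE \<inter> inside E A)"
    by (subst eq) (rule sum.union_disjoint[OF fin2 disj2])
  also have "sum x (\<Union>M\<in>C. inside E (A \<inter> M)) = (\<Sum>M\<in>C. sum x (inside E (A \<inter> M)))"
    by (rule sum.UNION_disjoint[OF fC fin disj])
  finally show ?thesis .
qed

end

context ctx begin

lemma card_decomp:
  assumes "A \<subseteq> L"
  shows "real (card A) = real (card (A - \<Union>C)) + (\<Sum>M\<in>C. real (card (A \<inter> M)))"
proof -
  have "A \<subseteq> V" using assms Lmem[OF Lin] by blast
  hence fA: "finite A" using fV by (rule finite_subset)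
  have eq: "(A - \<Union>C) \<union> (\<Union>M\<in>C. A \<inter> M) = A" by blast
  have fin: "\<forall>M\<in>C. finite (A \<inter> M)" using fA by simp
  have disj: "\<forall>M1\<in>C. \<forall>M2\<in>C. M1 \<noteq> M2 \<longrightarrow> (A \<inter> M1) \<inter> (A \<inter> M2) = {}"
    using C_disj by blast
  have f1: "finite (A - \<Union>C)" using fA by simp
  have f2: "finite (\<Union>M\<in>C. A \<inter> M)" using fA fC by simp
  have d12: "(A - \<Union>C) \<inter> (\<Union>M\<in>C. A \<inter> M) = {}" by blast
  have "card A = card (A - \<Union>C) + card (\<Union>M\<in>C. A \<inter> M)"
    using card_Un_disjoint[OF f1 f2 d12] eq by simp
  also have "card (\<Union>M\<in>C. A \<inter> M) = (\<Sum>M\<in>C. card (A \<inter> M))"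
    by (rule card_UN_disjoint[OF fC fin disj])
  finally show ?thesis by simp
qed

end


context ctx begin

lemma inside_empty: "inside E {} = {}"
  unfolding inside_def using edge_ne by auto

lemma comb:
  assumes e: "e \<in> CE" and f: "f \<in> CE" and xf: "x f > 0"
    and T: "T \<noteq> {}" "T \<subseteq> V" "sum x (inside E T) = real (card T) - 1" and eT: "e \<subseteq> T"
  shows "f \<subseteq> T"
proof (rule ccontr)
  assume fT: "\<not> f \<subseteq> T"
  have eE: "e \<in> E" "e \<subseteq> L" using e unfolding contracted_edges_def inside_def by auto
  have Lp: "L \<noteq> {}" "L \<subseteq> V" "sum x (inside E L) = real (card L) - 1" using Lmem[OF Lin] by auto
  define T' where "T' = T \<inter> L"
  have T'L: "T' \<subseteq> L" unfolding T'_def by blast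
  have eT': "e \<subseteq> T'" using eT eE unfolding T'_def by blast
  have T'ne: "T \<inter> L \<noteq> {}" using eT' edge_ne[OF eE(1)] unfolding T'_def by blast
  have T'tight: "sum x (inside E T') \<ge> real (card T') - 1"
    unfolding T'_def
    by (rule tight_uncross(1)[OF fV fE EV' xP T(2) _ Lp(2) _ T'ne]) (use T(3) Lp(3) in auto)
  define I where "I = {M\<in>C. M \<inter> T' \<noteq> {}}"
  define T'' where "T'' = T' \<union> \<Union>I"
  have IC: "I \<subseteq> C" unfolding I_def by blast
  have T''M: "T'' \<inter> M = (if M \<in> I then M else {})" if M: "M \<in> C" for M
  proof (cases "M \<in> I")
    case True
    hence "M \<subseteq> T''" unfolding T''_def by blast
    hence "T'' \<inter> M = M" by blast
    thus ?thesis using True by simp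
  next
    case False
    hence a: "T' \<inter> M = {}" using M unfolding I_def by blast
    have "\<forall>M'\<in>I. M' \<inter> M = {}"
    proof
      fix M' assume "M' \<in> I"
      hence "M' \<in> C" "M' \<noteq> M" using False IC by auto
      thus "M' \<inter> M = {}" using C_disj M by blast
    qed
    hence "T'' \<inter> M = {}" using a unfolding T''_def by blast
    thus ?thesis using False by simp
  qed
  have T''L: "T'' \<subseteq> L" unfolding T''_def using T'L IC C_sub by blast
  have T'T'': "T' \<subseteq> T''" unfolding T''_def by blast
  have T''ne: "T'' \<noteq> {}" using T'ne T'T'' unfolding T'_def by blast
  have T''V: "T'' \<subseteq> V" using T''L Lp(2) by blast
  define ind where "ind = (\<lambda>M. if M \<in> I then (1::real) else 0)"
  have ineq1: "sum x (inside E (T' \<inter> M)) \<le> real (card (T' \<inter> M)) - ind M" if M: "M \<in> C" for M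
  proof (cases "M \<in> I")
    case True
    hence "T' \<inter> M \<noteq> {}" unfolding I_def by blast
    moreover have "T' \<inter> M \<subseteq> V" using T'L Lp(2) by blast
    ultimately show ?thesis using inside_le[OF EV' xP] True unfolding ind_def by simp
  next
    case False
    hence "T' \<inter> M = {}" using M unfolding I_def by blast
    thus ?thesis using False unfolding ind_def by (simp add: inside_empty)
  qed
  define SA where "SA = (\<Sum>M\<in>C. if M \<in> I then real (card M) else 0)"
  define SI where "SI = (\<Sum>M\<in>C. ind M)"
  define ST where "ST = (\<Sum>M\<in>C. real (card (T' \<inter> M)))"
  have dT': "sum x (inside E T') = (\<Sum>M\<in>C. sum x (inside E (T' \<inter> M))) + sum x (CE \<inter> inside E T')"
    by (rule decomp[OF T'L])
  have dT'': "sum x (inside E T'') = (\<Sum>M\<in>C. sum x (inside E (T'' \<inter> M))) + sum x (CE \<inter> inside E T'')"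
    by (rule decomp[OF T''L])
  have cT': "real (card T') = real (card (T' - \<Union>C)) + ST" unfolding ST_def by (rule card_decomp[OF T'L])
  have cT'': "real (card T'') = real (card (T'' - \<Union>C)) + (\<Sum>M\<in>C. real (card (T'' \<inter> M)))"
    by (rule card_decomp[OF T''L])
  have loose: "T'' - \<Union>C = T' - \<Union>C" unfolding T''_def using IC by blast
  have s1: "(\<Sum>M\<in>C. sum x (inside E (T'' \<inter> M))) = SA - SI"
  proof -
    have "(\<Sum>M\<in>C. sum x (inside E (T'' \<inter> M))) = (\<Sum>M\<in>C. (if M \<in> I then real (card M) else 0) - ind M)"
    proof (rule sum.cong[OF refl])
      fix M assume M: "M \<in> C"
      show "sum x (inside E (T'' \<inter> M)) = (if M \<in> I then real (card M) else 0) - ind M"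
        using T''M[OF M] Lmem C_sub[OF M] unfolding ind_def by (simp add: inside_empty)
    qed
    thus ?thesis unfolding SA_def SI_def by (simp add: sum_subtractf)
  qed
  have s2: "(\<Sum>M\<in>C. real (card (T'' \<inter> M))) = SA"
    unfolding SA_def by (rule sum.cong[OF refl]) (simp add: T''M)
  have s3: "(\<Sum>M\<in>C. sum x (inside E (T' \<inter> M))) \<le> ST - SI"
  proof -
    have "(\<Sum>M\<in>C. sum x (inside E (T' \<inter> M))) \<le> (\<Sum>M\<in>C. real (card (T' \<inter> M)) - ind M)"
      by (rule sum_mono) (rule ineq1)
    thus ?thesis unfolding ST_def SI_def by (simp add: sum_subtractf)
  qed
  have CEmono: "sum x (CE \<inter> inside E T') \<le> sum x (CE \<inter> inside E T'')"
  proof (rule sum_mono2)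
    show "finite (CE \<inter> inside E T'')" using fE unfolding inside_def by simp
    show "CE \<inter> inside E T' \<subseteq> CE \<inter> inside E T''" using T'T'' unfolding inside_def by auto
    show "\<And>b. b \<in> CE \<inter> inside E T'' - CE \<inter> inside E T' \<Longrightarrow> 0 \<le> x b"
      using x0 unfolding inside_def by auto
  qed
  have T''ge: "sum x (inside E T'') \<ge> real (card T'') - 1"
    using dT' dT'' cT' cT''[unfolded loose] s1 s2 s3 CEmono T'tight by linarith
  have T''tight: "sum x (inside E T'') = real (card T'') - 1"
    using T''ge inside_le[OF EV' xP T''ne T''V] by linarith
  have key: "A \<subseteq> T'' \<or> T'' \<subseteq> A \<or> A \<inter> T'' = {}" if A: "A \<in> \<L>" for A
  proof -
    have "A \<subseteq> L \<or> L \<subseteq> A \<or> A \<inter> L = {}" using lamD[OF A Lin] .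
    moreover
    { assume "L \<subseteq> A" hence ?thesis using T''L by blast }
    moreover
    { assume "A \<inter> L = {}" hence ?thesis using T''L by blast }
    moreover
    { assume AL: "A \<subseteq> L"
      have ?thesis
      proof (cases "A = L")
        case True thus ?thesis using T''L by blast
      next
        case False
        then obtain M where M: "M \<in> C" "A \<subseteq> M" using exists_child[OF A] AL by blast
        show ?thesis
        proof (cases "M \<in> I")
          case True thus ?thesis using M T''M[OF M(1)] by auto
        next
          case False thus ?thesis using M T''M[OF M(1)] by auto
        qed
      qed }
    ultimately show ?thesis by blast
  qed
  have "tight_laminar V E x (insert T'' \<L>)"
    unfolding tight_laminar_def
  proof (intro conjI)
    show "laminar (insert T'' \<L>)" unfolding laminar_def
    proof (intro ballI)
      fix A B assume "A \<in> insert T'' \<L>" "B \<in> insert T'' \<L>"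
      thus "A \<subseteq> B \<or> B \<subseteq> A \<or> A \<inter> B = {}"
        using key lamD by blast
    qed
    show "\<forall>A\<in>insert T'' \<L>. A \<noteq> {} \<and> A \<subseteq> V \<and> sum x (inside E A) = real (card A) - 1"
      using Lmem T''ne T''V T''tight by blast
  qed
  hence "insert T'' \<L> = \<L>" using LD unfolding laminar_decomposition_def by blast
  hence T''in: "T'' \<in> \<L>" by blast
  have T''eq: "T'' = L"
  proof (rule ccontr)
    assume "T'' \<noteq> L"
    hence "T'' \<subset> L" using T''L by blast
    then obtain M where "M \<in> C" "T'' \<subseteq> M" using exists_child[OF T''in] by blast
    hence "e \<subseteq> M" using eT' T'T'' by blast
    thus False using e \<open>M \<in> C\<close> unfolding contracted_edges_def by blast
  qed
  have allI: "M \<in> I" if M: "M \<in> C" for M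
  proof (rule ccontr)
    assume "M \<notin> I"
    hence "T'' \<inter> M = {}" using T''M[OF M] by simp
    moreover have "M \<subseteq> T''" using C_sub[OF M] T''eq by blast
    ultimately have "M = {}" by blast
    thus False using Lmem C_sub[OF M] by blast
  qed
  have SI_C: "SI = real (card C)" unfolding SI_def ind_def using allI by simp
  have SA_C: "SA = (\<Sum>M\<in>C. real (card M))" unfolding SA_def using allI by simp
  have cL: "real (card L) = real (card (L - \<Union>C)) + (\<Sum>M\<in>C. real (card (L \<inter> M)))"
    by (rule card_decomp) simp
  have LM: "(\<Sum>M\<in>C. real (card (L \<inter> M))) = (\<Sum>M\<in>C. real (card M))"
  proof (rule sum.cong[OF refl])
    fix M assume M: "M \<in> C"
    hence "L \<inter> M = M" using C_sub by blast
    thus "real (card (L \<inter> M)) = real (card M)" by simp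
  qed
  have dL: "sum x (inside E L) = (\<Sum>M\<in>C. sum x (inside E (L \<inter> M))) + sum x (CE \<inter> inside E L)"
    by (rule decomp) simp
  have LM2: "(\<Sum>M\<in>C. sum x (inside E (L \<inter> M))) = (\<Sum>M\<in>C. real (card M)) - real (card C)"
  proof -
    have "(\<Sum>M\<in>C. sum x (inside E (L \<inter> M))) = (\<Sum>M\<in>C. real (card M) - 1)"
    proof (rule sum.cong[OF refl])
      fix M assume M: "M \<in> C"
      hence "L \<inter> M = M" using C_sub by blast
      thus "sum x (inside E (L \<inter> M)) = real (card M) - 1" using Lmem C_sub[OF M] by simp
    qed
    thus ?thesis by (simp add: sum_subtractf)
  qed
  have CEL: "CE \<inter> inside E L = CE" unfolding contracted_edges_def by blast
  have fLl: "finite (T' - \<Union>C)" using T'L Lp(2) fV finite_subset by (meson Diff_subset order_trans)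
  have looseL: "L - \<Union>C \<subseteq> T' - \<Union>C"
    using T''eq unfolding T''_def using IC by blast
  have cmono: "real (card (L - \<Union>C)) \<le> real (card (T' - \<Union>C))"
    using card_mono[OF fLl looseL] by simp
  have ge: "sum x (CE \<inter> inside E T') \<ge> sum x CE"
    using dT' cT' s3 T'tight SI_C cL LM dL[unfolded CEL] LM2 Lp(3) cmono by linarith
  have fCE: "finite CE" using fE unfolding contracted_edges_def inside_def by simp
  have split: "sum x CE = sum x (CE \<inter> inside E T') + sum x (CE - inside E T')"
    by (metis fCE sum.Int_Diff)
  have fin2: "f \<in> CE - inside E T'" using f fT unfolding T'_def inside_def by auto
  have "x f \<le> sum x (CE - inside E T')"
    by (rule member_le_sum) (use fin2 fCE x0 in \<open>auto simp: contracted_edges_def inside_def\<close>)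
  thus False using ge split xf by linarith
qed

end


lemma bdd_cost:
  assumes fE: "finite E" and EV: "\<forall>e\<in>E. e \<subseteq> V"
  shows "bdd_below ((\<lambda>x. cost E w x - K) ` P_ST V E)"
proof -
  define B where "B = (\<Sum>e\<in>E. - \<bar>w e\<bar> * real (card V)) - K"
  have "B \<le> cost E w x - K" if x: "x \<in> P_ST V E" for x
  proof -
    have x0: "\<forall>e\<in>E. x e \<ge> 0" and xs: "sum x E = real (card V) - 1" using x unfolding P_ST_def by auto
    have "(\<Sum>e\<in>E. - \<bar>w e\<bar> * real (card V)) \<le> (\<Sum>e\<in>E. w e * x e)"
    proof (rule sum_mono)
      fix e assume e: "e \<in> E"
      have "x e \<le> sum x E" using member_le_sum[of e E x] e x0 fE by simp
      hence xe: "0 \<le> x e" "x e \<le> real (card V)" using xs x0 e by auto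
      have "- \<bar>w e\<bar> * real (card V) \<le> - \<bar>w e\<bar> * x e"
        using xe by (simp add: mult_left_mono)
      also have "\<dots> \<le> w e * x e" using xe
        by (smt (verit, best) abs_ge_self abs_minus_cancel abs_mult abs_of_nonneg mult_minus_left)
      finally show "- \<bar>w e\<bar> * real (card V) \<le> w e * x e" .
    qed
    thus ?thesis unfolding B_def cost_def by simp
  qed
  thus ?thesis unfolding bdd_below_def by blast
qed

lemma lag_opt:
  assumes fV: "finite V" and fE: "finite E" and EV: "\<forall>e\<in>E. e \<subseteq> V" and fS: "finite \<S>"
    and opt: "optimal_P V E c \<S> b lam xs" and dopt: "dual_optimal V E c \<S> b lam ys"
  shows "\<forall>x\<in>P_ST V E. cost E (cy E \<S> c ys) xs \<le> cost E (cy E \<S> c ys) x"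
proof
  fix x assume x: "x \<in> P_ST V E"
  obtain y where y: "\<forall>S\<in>\<S>. y S \<ge> 0" "\<forall>x\<in>P_ST V E.
           cost E (cy E \<S> c y) x - lam * (\<Sum>S\<in>\<S>. real_of_int (b S) * y S) \<ge> cost E c xs"
    using lagrange_exists[OF fV fE EV fS opt] by blast
  have feas: "feasible_P V E \<S> b lam xs" using opt unfolding optimal_P_def by blast
  hence xsP: "xs \<in> P_ST V E" unfolding feasible_P_def by blast
  have "cost E c xs \<le> g_lam V E c \<S> b lam y"
    unfolding g_lam_def using xsP y(2) by (intro cINF_greatest) auto
  also have "\<dots> \<le> g_lam V E c \<S> b lam ys" using dopt y(1) unfolding dual_optimal_def by blast
  also have "\<dots> \<le> cost E (cy E \<S> c ys) x - lam * (\<Sum>S\<in>\<S>. real_of_int (b S) * ys S)"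
    unfolding g_lam_def by (rule cINF_lower[OF bdd_cost[OF fE EV] x])
  finally have 1: "cost E c xs \<le> cost E (cy E \<S> c ys) x - lam * (\<Sum>S\<in>\<S>. real_of_int (b S) * ys S)" .
  have ys0: "\<forall>S\<in>\<S>. ys S \<ge> 0" using dopt unfolding dual_optimal_def by blast
  have "(\<Sum>S\<in>\<S>. ys S * sum xs (cut E S)) \<le> (\<Sum>S\<in>\<S>. ys S * (lam * real_of_int (b S)))"
  proof (rule sum_mono)
    fix S assume S: "S \<in> \<S>"
    have "sum xs (cut E S) \<le> lam * real_of_int (b S)" using feas S unfolding feasible_P_def by blast
    thus "ys S * sum xs (cut E S) \<le> ys S * (lam * real_of_int (b S))" using ys0 S by (simp add: mult_left_mono)
  qed
  also have "\<dots> = lam * (\<Sum>S\<in>\<S>. real_of_int (b S) * ys S)"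
    by (simp add: sum_distrib_left algebra_simps)
  finally have 2: "cost E (cy E \<S> c ys) xs \<le> cost E c xs + lam * (\<Sum>S\<in>\<S>. real_of_int (b S) * ys S)"
    unfolding cost_cy[OF fE fS] by simp
  show "cost E (cy E \<S> c ys) xs \<le> cost E (cy E \<S> c ys) x" using 1 2 by linarith
qed


lemma dot_d:
  assumes "finite E" "e \<in> E" "f \<in> E"
  shows "dot E a (\<lambda>g. (if g = e then 1 else 0) - (if g = f then (1::real) else 0)) = a e - a f"
proof -
  have "dot E a (\<lambda>g. (if g = e then 1 else 0) - (if g = f then (1::real) else 0))
      = (\<Sum>g\<in>E. (if g = e then a g else 0)) - (\<Sum>g\<in>E. (if g = f then a g else 0))"
  proof -
    have "\<And>g. a g * ((if g = e then 1 else 0) - (if g = f then (1::real) else 0))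
        = (if g = e then a g else 0) - (if g = f then a g else 0)" by simp
    thus ?thesis unfolding dot_def by (simp only: sum_subtractf)
  qed
  thus ?thesis using assms by simp
qed

theorem lemma5:
  fixes V :: "'a set" and E :: "'a set set" and c :: "'a set \<Rightarrow> real"
    and \<S> :: "'a set set" and b :: "'a set \<Rightarrow> int" and lam :: real
    and xs :: "'a set \<Rightarrow> real" and ys :: "'a set \<Rightarrow> real" and \<L> :: "'a set set"
  assumes "connected_graph V E"
    and "\<forall>e\<in>E. c e \<ge> 0"
    and "chain_family V \<S>"
    and "lam \<ge> 1"
    and "optimal_P V E c \<S> b lam xs"
    and "dual_optimal V E c \<S> b lam ys"
    and "laminar_decomposition V E xs \<L>"
  shows "\<forall>L\<in>\<L>. \<forall>e\<in>contracted_edges E \<L> L. \<forall>f\<in>contracted_edges E \<L> L.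
           xs e > 0 \<longrightarrow> xs f > 0 \<longrightarrow> cy E \<S> c ys e = cy E \<S> c ys f"
proof (intro ballI impI)
  fix L e f
  assume L: "L \<in> \<L>" and e: "e \<in> contracted_edges E \<L> L" and f: "f \<in> contracted_edges E \<L> L"
    and xe: "xs e > 0" and xf: "xs f > 0"
  have gr: "graph V E" using assms(1) unfolding connected_graph_def by blast
  hence fV: "finite V" and EV2: "\<forall>e\<in>E. e \<subseteq> V \<and> card e = 2" unfolding graph_def by auto
  have EV: "\<forall>e\<in>E. e \<subseteq> V" using EV2 by blast
  have fE: "finite E"
  proof -
    have "E \<subseteq> Pow V" using EV by auto
    thus ?thesis using fV by (meson finite_Pow_iff finite_subset)
  qed
  have fS: "finite \<S>"
  proof -
    have "\<S> \<subseteq> Pow V" using assms(3) unfolding chain_family_def by auto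
    thus ?thesis using fV by (meson finite_Pow_iff finite_subset)
  qed
  have xsP: "xs \<in> P_ST V E" using assms(5) unfolding optimal_P_def feasible_P_def by blast
  have ctx: "ctx V E xs \<L> L" unfolding ctx_def using fV EV2 xsP assms(7) L by blast
  have eE: "e \<in> E" and fE': "f \<in> E" using e f unfolding contracted_edges_def inside_def by auto
  have tight_iff: "e \<subseteq> S \<longleftrightarrow> f \<subseteq> S"
    if S: "S \<noteq> {}" "S \<subseteq> V" "sum xs (inside E S) = real (card S) - 1" for S
    using ctx.comb[OF ctx e f xf S] ctx.comb[OF ctx f e xe S] by blast
  define d where "d = (\<lambda>g. (if g = e then 1 else 0) - (if g = f then (1::real) else 0))"
  have dotd: "dot E a d = a e - a f" for a unfolding d_def by (rule dot_d[OF fE eE fE'])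
  have active0: "dot E (avec E j) d = 0"
    if j: "j \<in> JP V E" "dot E (avec E j) xs = beta V lam b j" for j
  proof -
    have "j \<in> (\<lambda>g. (0::nat, g)) ` E \<or> j \<in> (\<lambda>S. (1, S)) ` {S. S \<noteq> {} \<and> S \<subset> V} \<or> j = (2, {}) \<or> j = (3, {})"
      using j(1) unfolding JP_def by blast
    moreover
    { assume "j \<in> (\<lambda>g. (0::nat, g)) ` E"
      then obtain g where g: "g \<in> E" "j = (0, g)" by blast
      hence "xs g = 0" using j(2) dot_a0[OF fE g(1)] unfolding beta_def by simp
      hence "g \<noteq> e" "g \<noteq> f" using xe xf by auto
      hence ?thesis unfolding dotd g(2) avec_def by auto }
    moreover
    { assume "j \<in> (\<lambda>S. (1, S)) ` {S. S \<noteq> {} \<and> S \<subset> V}"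
      then obtain S where S: "S \<noteq> {}" "S \<subset> V" "j = (1, S)" by blast
      hence "sum xs (inside E S) = real (card S) - 1" using j(2) dot_a1[OF fE] unfolding beta_def by simp
      hence "e \<subseteq> S \<longleftrightarrow> f \<subseteq> S" using tight_iff S by blast
      hence ?thesis unfolding dotd S(3) avec_def by auto }
    moreover
    { assume "j = (2, {}) \<or> j = (3, {})"
      hence ?thesis unfolding dotd avec_def by auto }
    ultimately show ?thesis by blast
  qed
  define J1 where "J1 = {j\<in>JP V E. dot E (avec E j) xs \<noteq> beta V lam b j}"
  have fJ1: "finite J1" using finite_JP[OF fV fE] unfolding J1_def by simp
  have xsJ: "\<forall>j\<in>JP V E. dot E (avec E j) xs \<le> beta V lam b j"
    using xsP P_ST_iff[OF fE EV] by blast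
  have "\<forall>j\<in>J1. beta V lam b j - dot E (avec E j) xs > 0"
    using xsJ unfolding J1_def by force
  then obtain \<epsilon> where \<epsilon>: "\<epsilon> > 0"
    "\<forall>j\<in>J1. \<epsilon> * \<bar>dot E (avec E j) d\<bar> \<le> beta V lam b j - dot E (avec E j) xs"
    using small_eps[OF fJ1, of "\<lambda>j. beta V lam b j - dot E (avec E j) xs" "\<lambda>j. \<bar>dot E (avec E j) d\<bar>"]
    by blast
  have xt: "(\<lambda>g. xs g + t * d g) \<in> P_ST V E" if t: "\<bar>t\<bar> \<le> \<epsilon>" for t
  proof -
    have "\<forall>j\<in>JP V E. dot E (avec E j) (\<lambda>g. xs g + t * d g) \<le> beta V lam b j"
    proof
      fix j assume j: "j \<in> JP V E"
      have eq: "dot E (avec E j) (\<lambda>g. xs g + t * d g) = dot E (avec E j) xs + t * dot E (avec E j) d"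
        by (rule dot_add_right)
      show "dot E (avec E j) (\<lambda>g. xs g + t * d g) \<le> beta V lam b j"
      proof (cases "j \<in> J1")
        case False
        hence "dot E (avec E j) xs = beta V lam b j" using j unfolding J1_def by blast
        thus ?thesis using eq active0[OF j] by simp
      next
        case True
        have "t * dot E (avec E j) d \<le> \<bar>t\<bar> * \<bar>dot E (avec E j) d\<bar>"
          by (metis abs_ge_self abs_mult)
        also have "\<dots> \<le> \<epsilon> * \<bar>dot E (avec E j) d\<bar>" using t by (simp add: mult_right_mono)
        also have "\<dots> \<le> beta V lam b j - dot E (avec E j) xs" using \<epsilon>(2) True by blast
        finally show ?thesis using eq by linarith
      qed
    qed
    thus ?thesis using P_ST_iff[OF fE EV] by blast
  qed
  have lo: "\<forall>x\<in>P_ST V E. cost E (cy E \<S> c ys) xs \<le> cost E (cy E \<S> c ys) x"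
    by (rule lag_opt[OF fV fE EV fS assms(5) assms(6)])
  have ct: "cost E (cy E \<S> c ys) (\<lambda>g. xs g + t * d g)
      = cost E (cy E \<S> c ys) xs + t * (cy E \<S> c ys e - cy E \<S> c ys f)" for t
    unfolding cost_dot dot_add_right dotd ..
  have "cost E (cy E \<S> c ys) xs \<le> cost E (cy E \<S> c ys) (\<lambda>g. xs g + \<epsilon> * d g)"
    using lo xt[of \<epsilon>] \<epsilon>(1) by simp
  hence a: "\<epsilon> * (cy E \<S> c ys e - cy E \<S> c ys f) \<ge> 0" unfolding ct by simp
  have "cost E (cy E \<S> c ys) xs \<le> cost E (cy E \<S> c ys) (\<lambda>g. xs g + (- \<epsilon>) * d g)"
    using lo xt[of "- \<epsilon>"] \<epsilon>(1) by simp
  hence b: "(- \<epsilon>) * (cy E \<S> c ys e - cy E \<S> c ys f) \<ge> 0" unfolding ct by simp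
  from a b \<epsilon>(1) show "cy E \<S> c ys e = cy E \<S> c ys f"
    by (smt (verit) mult_minus_left zero_less_mult_iff)
qed


end
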